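(* Let $f_1,f_2:\mathbb R^d\to\mathbb R$ be convex with $\nabla f_i$ globally Lipschitz continuous with modulus $L_i>0$ ($i=1,2$), let $f_3:\mathbb R^d\to\mathbb R\cup\{+\infty\}$ be proper and lower semicontinuous, and assume $\varphi:=f_1+f_2+f_3$ has a nonempty set of minimizers. Let $\alpha,\gamma,\lambda>0$ and let $(x_1^k,x_2^k,x_3^k)_k$, $(z_1^k,z_2^k)_k$ be sequences generated by the relaxed Ryu splitting method. Writing $\Delta x_i^k=x_i^{k+1}-x_i^k$ and $\Delta g_i^k=\nabla f_i(x_i^{k+1})-\nabla f_i(x_i^k)$ for $i=1,2$, for all $k\ge0$: $$\sum_{i=1}^2\Big[f_i(x_i^k)-f_i(x_i^{k+1})-\langle\nabla f_i(x_i^{k+1}),x_3^k-x_i^{k+1}\rangle+\langle\nabla f_i(x_i^k),x_3^k-x_i^k\rangle\Big]$$ $$\ge\sum_{i=1}^2\Big(\frac{1}{2L_i}-\frac{\gamma}{\lambda}\Big)\|\Delta g_i^k\|^2-\frac{1}{\lambda}\langle\Delta g_1^k,\Delta x_1^k\rangle-\frac{\alpha}{\lambda}\langle\Delta g_2^k,\Delta x_2^k\rangle+\frac{\alpha}{\lambda}\langle\Delta g_2^k,\Delta x_1^k\rangle.$$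
   Context: For $h:\mathbb R^d\to\mathbb R\cup\{+\infty\}$ and $\gamma>0$, $\mathrm{prox}_{\gamma h}(z):=\operatorname{argmin}_{y}\{h(y)+\frac{1}{2\gamma}\|y-z\|^2\}$. The relaxed Ryu splitting method: given $z_1^0,z_2^0\in\mathbb R^d$, for $k\ge0$, $x_1^k=\mathrm{prox}_{\gamma f_1}(z_1^k)$, $x_2^k=\mathrm{prox}_{\frac{\gamma}{\alpha}f_2}(\frac{z_2^k}{\alpha}+x_1^k)$, $x_3^k\in\mathrm{prox}_{\gamma f_3}(x_1^k-z_1^k+x_2^k-z_2^k)$, $z_1^{k+1}=z_1^k+\lambda(x_3^k-x_1^k)$, $z_2^{k+1}=z_2^k+\lambda(x_3^k-x_2^k)$. *)

theory Defs
  imports "HOL-Analysis.Analysis" "HOL-Library.Extended_Real"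
begin

definition prox :: "('a::real_normed_vector \<Rightarrow> ereal) \<Rightarrow> real \<Rightarrow> 'a \<Rightarrow> 'a set" where
  "prox h \<gamma> z = {y. \<forall>w. h y + ereal (norm (y - z)^2 / (2*\<gamma>)) \<le> h w + ereal (norm (w - z)^2 / (2*\<gamma>))}"

definition proper_fun :: "('a \<Rightarrow> ereal) \<Rightarrow> bool" where
  "proper_fun h \<longleftrightarrow> (\<forall>x. h x \<noteq> -\<infinity>) \<and> (\<exists>x. h x \<noteq> \<infinity>)"

definition lsc :: "('a::topological_space \<Rightarrow> ereal) \<Rightarrow> bool" where
  "lsc h \<longleftrightarrow> (\<forall>x. h x \<le> Liminf (at x) h)"

end

theory Submission
  imports Defs
begin

lemma line_deriv:
  fixes f :: "'a::real_inner \<Rightarrow> real"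
  assumes "\<And>x. GDERIV f x :> g x"
  shows "((\<lambda>t. f (a + t *\<^sub>R v)) has_real_derivative inner (g (a + t *\<^sub>R v)) v) (at t)"
proof -
  have d1: "((\<lambda>t. a + t *\<^sub>R v) has_derivative (\<lambda>s. s *\<^sub>R v)) (at t)"
    by (auto intro!: derivative_eq_intros)
  have d2: "(f has_derivative (\<lambda>h. inner h (g (a + t *\<^sub>R v)))) (at (a + t *\<^sub>R v))"
    using assms unfolding gderiv_def by blast
  have "((\<lambda>t. f (a + t *\<^sub>R v)) has_derivative (\<lambda>s. inner (s *\<^sub>R v) (g (a + t *\<^sub>R v)))) (at t)"
    using has_derivative_compose[OF d1 d2] by (simp add: o_def)
  moreover have "(\<lambda>s. inner (s *\<^sub>R v) (g (a + t *\<^sub>R v))) = (*) (inner (g (a + t *\<^sub>R v)) v)"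
    by (auto simp: fun_eq_iff inner_commute)
  ultimately show ?thesis unfolding has_field_derivative_def by simp
qed

lemma descent:
  fixes f :: "'a::real_inner \<Rightarrow> real"
  assumes gd: "\<And>x. GDERIV f x :> g x" and lip: "L-lipschitz_on UNIV g"
  shows "f b \<le> f a + inner (g a) (b - a) + L/2 * norm (b - a)^2"
proof -
  define v where "v = b - a"
  define k where "k t = f (a + t *\<^sub>R v) - t * inner (g a) v - L/2 * t^2 * norm v ^2" for t
  define k' where "k' t = inner (g (a + t *\<^sub>R v)) v - inner (g a) v - L * t * norm v ^2" for t
  have der: "\<And>t. (k has_real_derivative k' t) (at t)"
    unfolding k_def[abs_def] k'_def
    by (rule derivative_eq_intros line_deriv[OF gd] refl | simp)+
  obtain z where z: "0 < z" "z < 1" "k 1 - k 0 = (1 - 0) * k' z"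
    using MVT2[of 0 1 k k'] der by auto
  have "k' z \<le> 0"
  proof -
    have "inner (g (a + z *\<^sub>R v) - g a) v \<le> norm (g (a + z *\<^sub>R v) - g a) * norm v"
      by (rule norm_cauchy_schwarz)
    also have "norm (g (a + z *\<^sub>R v) - g a) \<le> L * norm (a + z *\<^sub>R v - a)"
      using lipschitz_onD[OF lip, of "a + z *\<^sub>R v" a] by (simp add: dist_norm)
    hence "norm (g (a + z *\<^sub>R v) - g a) * norm v \<le> L * norm (a + z *\<^sub>R v - a) * norm v"
      by (simp add: mult_right_mono)
    also have "L * norm (a + z *\<^sub>R v - a) * norm v = L * z * norm v ^2"
      using z by (simp add: power2_eq_square)
    finally show ?thesis unfolding k'_def by (simp add: inner_diff_left)
  qed
  with z have "k 1 \<le> k 0" by simp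
  then show ?thesis unfolding k_def v_def by simp
qed

lemma tangent:
  fixes f :: "'a::real_inner \<Rightarrow> real"
  assumes cvx: "convex_on UNIV f" and gd: "\<And>x. GDERIV f x :> g x"
  shows "f u \<ge> f y + inner (g y) (u - y)"
proof -
  define h where "h t = f (y + t *\<^sub>R (u - y))" for t
  have hc: "convex_on UNIV h"
    unfolding h_def
  proof (rule convex_onI[OF _ convex_UNIV])
    fix s a b :: real assume s: "0 < s" "s < 1"
    have e: "y + ((1 - s) * a + s * b) *\<^sub>R (u - y) = (1 - s) *\<^sub>R (y + a *\<^sub>R (u - y)) + s *\<^sub>R (y + b *\<^sub>R (u - y))"
      by (simp add: algebra_simps)
    show "f (y + ((1 - s) *\<^sub>R a + s *\<^sub>R b) *\<^sub>R (u - y)) \<le> (1 - s) * f (y + a *\<^sub>R (u - y)) + s * f (y + b *\<^sub>R (u - y))"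
      using convex_onD[OF cvx, of s] s by (simp add: e[simplified])
  qed
  have hd: "(h has_real_derivative inner (g y) (u - y)) (at 0)"
    unfolding h_def[abs_def] using line_deriv[OF gd, of y "u - y" 0] by simp
  have "h 1 - h 0 \<ge> inner (g y) (u - y) * (1 - 0)"
    by (rule convex_on_imp_above_tangent[OF hc]) (use hd in auto)
  then show ?thesis unfolding h_def by simp
qed

lemma cocoercive:
  fixes f :: "'a::real_inner \<Rightarrow> real"
  assumes cvx: "convex_on UNIV f" and gd: "\<And>x. GDERIV f x :> g x"
    and lip: "L-lipschitz_on UNIV g" and L: "L > 0"
  shows "f x - f y - inner (g y) (x - y) \<ge> 1/(2*L) * norm (g x - g y)^2"
proof -
  define D where "D = g x - g y"
  define u where "u = x - (1/L) *\<^sub>R D"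
  have A: "f u \<le> f x + inner (g x) (u - x) + L/2 * norm (u - x)^2"
    by (rule descent[OF gd lip])
  have B: "f u \<ge> f y + inner (g y) (u - y)"
    by (rule tangent[OF cvx gd])
  have ux: "u - x = - (1/L) *\<^sub>R D" unfolding u_def by simp
  have uy: "u - y = (x - y) - (1/L) *\<^sub>R D" unfolding u_def by simp
  have n: "norm (u - x)^2 = (1/L)^2 * norm D ^2"
    unfolding ux using L by (simp add: power_divide)
  have i1: "inner (g x) (u - x) - inner (g y) (u - y) = - inner (g y) (x - y) - (1/L) * inner D D"
    unfolding ux uy D_def by (simp add: inner_diff_left inner_diff_right inner_commute algebra_simps diff_divide_distrib)
  have "f x - f y - inner (g y) (x - y) \<ge> (1/L) * norm D ^2 - L/2 * ((1/L)^2 * norm D ^2)"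
    using A B i1 n by (simp add: power2_norm_eq_inner)
  moreover have "(1/L) * norm D ^2 - L/2 * ((1/L)^2 * norm D ^2) = 1/(2*L) * norm D^2"
    using L by (simp add: field_simps power2_eq_square)
  ultimately show ?thesis unfolding D_def by simp
qed

lemma prox_opt:
  fixes f :: "'a::real_inner \<Rightarrow> real"
  assumes gd: "\<And>x. GDERIV f x :> g x" and c: "c > 0"
    and y: "y \<in> prox (\<lambda>x. ereal (f x)) c z"
  shows "g y = (1/c) *\<^sub>R (z - y)"
proof -
  define F where "F w = f w + inner (w - z) (w - z) / (2*c)" for w
  have min: "\<forall>w\<in>UNIV. F y \<le> F w"
    using y unfolding prox_def F_def by (auto simp: power2_norm_eq_inner)
  have d: "(F has_derivative (\<lambda>h. inner h (g y) + (inner h (y - z) + inner (y - z) h)/(2*c))) (at y)"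
    unfolding F_def[abs_def] using gd[of y] unfolding gderiv_def
    using c by (auto intro!: derivative_eq_intros simp: fun_eq_iff field_simps)
  have "(\<lambda>h. inner h (g y) + (inner h (y - z) + inner (y - z) h)/(2*c)) = (\<lambda>v. 0)"
    by (rule differential_zero_maxmin[OF _ open_UNIV d]) (use min in auto)
  then have "\<And>h. inner h (g y) + (inner h (y - z) + inner (y - z) h)/(2*c) = 0"
    by (metis)
  then have "\<And>h. inner h (g y - (1/c) *\<^sub>R (z - y)) = 0"
  proof -
    fix h assume H: "\<And>h. inner h (g y) + (inner h (y - z) + inner (y - z) h)/(2*c) = 0"
    have "inner h (g y) + inner h (y - z) / c = 0" using H[of h] by (simp add: inner_commute)
    then show "inner h (g y - (1/c) *\<^sub>R (z - y)) = 0"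
      by (simp add: inner_diff_right inner_diff_left algebra_simps diff_divide_distrib)
  qed
  from this[of "g y - (1/c) *\<^sub>R (z - y)"] show ?thesis by simp
qed

theorem lemma4:
  fixes f1 f2 :: "'a::euclidean_space \<Rightarrow> real"
    and g1 g2 :: "'a \<Rightarrow> 'a"
    and f3 :: "'a \<Rightarrow> ereal"
    and L1 L2 \<alpha> \<gamma> lam :: real
    and x1 x2 x3 z1 z2 :: "nat \<Rightarrow> 'a"
  assumes cvx1: "convex_on UNIV f1" and cvx2: "convex_on UNIV f2"
    and grad1: "\<And>x. GDERIV f1 x :> g1 x" and grad2: "\<And>x. GDERIV f2 x :> g2 x"
    and L1pos: "L1 > 0" and L2pos: "L2 > 0"
    and lip1: "L1-lipschitz_on UNIV g1" and lip2: "L2-lipschitz_on UNIV g2"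
    and proper3: "proper_fun f3" and lsc3: "lsc f3"
    and minim: "\<exists>x. \<forall>y. ereal (f1 x) + ereal (f2 x) + f3 x \<le> ereal (f1 y) + ereal (f2 y) + f3 y"
    and \<alpha>pos: "\<alpha> > 0" and \<gamma>pos: "\<gamma> > 0" and lampos: "lam > 0"
    and it1: "\<And>k. x1 k \<in> prox (\<lambda>x. ereal (f1 x)) \<gamma> (z1 k)"
    and it2: "\<And>k. x2 k \<in> prox (\<lambda>x. ereal (f2 x)) (\<gamma> / \<alpha>) ((1/\<alpha>) *\<^sub>R z2 k + x1 k)"
    and it3: "\<And>k. x3 k \<in> prox f3 \<gamma> (x1 k - z1 k + x2 k - z2 k)"
    and up1: "\<And>k. z1 (Suc k) = z1 k + lam *\<^sub>R (x3 k - x1 k)"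
    and up2: "\<And>k. z2 (Suc k) = z2 k + lam *\<^sub>R (x3 k - x2 k)"
  shows "(f1 (x1 k) - f1 (x1 (Suc k)) - inner (g1 (x1 (Suc k))) (x3 k - x1 (Suc k))
            + inner (g1 (x1 k)) (x3 k - x1 k))
       + (f2 (x2 k) - f2 (x2 (Suc k)) - inner (g2 (x2 (Suc k))) (x3 k - x2 (Suc k))
            + inner (g2 (x2 k)) (x3 k - x2 k))
     \<ge> (1 / (2 * L1) - \<gamma> / lam) * norm (g1 (x1 (Suc k)) - g1 (x1 k))^2
       + (1 / (2 * L2) - \<gamma> / lam) * norm (g2 (x2 (Suc k)) - g2 (x2 k))^2
       - (1 / lam) * inner (g1 (x1 (Suc k)) - g1 (x1 k)) (x1 (Suc k) - x1 k)
       - (\<alpha> / lam) * inner (g2 (x2 (Suc k)) - g2 (x2 k)) (x2 (Suc k) - x2 k)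
       + (\<alpha> / lam) * inner (g2 (x2 (Suc k)) - g2 (x2 k)) (x1 (Suc k) - x1 k)"
proof -
  let ?g1 = "g1 (x1 (Suc k)) - g1 (x1 k)" and ?g2 = "g2 (x2 (Suc k)) - g2 (x2 k)"
  let ?d1 = "x1 (Suc k) - x1 k" and ?d2 = "x2 (Suc k) - x2 k"
  have o1: "\<And>j. g1 (x1 j) = (1/\<gamma>) *\<^sub>R (z1 j - x1 j)"
    using prox_opt[OF grad1 \<gamma>pos it1] .
  have o2: "\<And>j. g2 (x2 j) = (1/(\<gamma>/\<alpha>)) *\<^sub>R (((1/\<alpha>) *\<^sub>R z2 j + x1 j) - x2 j)"
    using prox_opt[OF grad2 _ it2] \<gamma>pos \<alpha>pos by simp
  have z1e: "\<And>j. z1 j = \<gamma> *\<^sub>R g1 (x1 j) + x1 j"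
    using o1 \<gamma>pos by simp
  have z2e: "\<And>j. z2 j = \<gamma> *\<^sub>R g2 (x2 j) - \<alpha> *\<^sub>R x1 j + \<alpha> *\<^sub>R x2 j"
  proof -
    fix j
    have "\<gamma> *\<^sub>R g2 (x2 j) = (\<gamma> * (1/(\<gamma>/\<alpha>))) *\<^sub>R (((1/\<alpha>) *\<^sub>R z2 j + x1 j) - x2 j)"
      using o2[of j] by simp
    also have "\<gamma> * (1/(\<gamma>/\<alpha>)) = \<alpha>" using \<gamma>pos by simp
    also have "\<alpha> *\<^sub>R (((1/\<alpha>) *\<^sub>R z2 j + x1 j) - x2 j) = z2 j + \<alpha> *\<^sub>R x1 j - \<alpha> *\<^sub>R x2 j"
      using \<alpha>pos by (simp add: algebra_simps)
    finally show "z2 j = \<gamma> *\<^sub>R g2 (x2 j) - \<alpha> *\<^sub>R x1 j + \<alpha> *\<^sub>R x2 j" by (simp add: algebra_simps)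
  qed
  have r1: "lam *\<^sub>R (x3 k - x1 k) = ?d1 + \<gamma> *\<^sub>R ?g1"
    using up1[of k] z1e[of k] z1e[of "Suc k"] by (simp add: algebra_simps)
  have r2: "lam *\<^sub>R (x3 k - x2 k) = \<gamma> *\<^sub>R ?g2 + \<alpha> *\<^sub>R ?d2 - \<alpha> *\<^sub>R ?d1"
    using up2[of k] z2e[of k] z2e[of "Suc k"] by (simp add: algebra_simps)
  have s1: "x3 k - x1 k = (1/lam) *\<^sub>R (?d1 + \<gamma> *\<^sub>R ?g1)"
    using arg_cong[OF r1, of "scaleR (1/lam)"] lampos by simp
  have s2: "x3 k - x2 k = (1/lam) *\<^sub>R (\<gamma> *\<^sub>R ?g2 + \<alpha> *\<^sub>R ?d2 - \<alpha> *\<^sub>R ?d1)"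
    using arg_cong[OF r2, of "scaleR (1/lam)"] lampos by simp
  have c1: "f1 (x1 k) - f1 (x1 (Suc k)) - inner (g1 (x1 (Suc k))) (x1 k - x1 (Suc k)) \<ge> 1/(2*L1) * norm ?g1^2"
    using cocoercive[OF cvx1 grad1 lip1 L1pos, of "x1 k" "x1 (Suc k)"] by (simp add: norm_minus_commute)
  have c2: "f2 (x2 k) - f2 (x2 (Suc k)) - inner (g2 (x2 (Suc k))) (x2 k - x2 (Suc k)) \<ge> 1/(2*L2) * norm ?g2^2"
    using cocoercive[OF cvx2 grad2 lip2 L2pos, of "x2 k" "x2 (Suc k)"] by (simp add: norm_minus_commute)
  have e1: "f1 (x1 k) - f1 (x1 (Suc k)) - inner (g1 (x1 (Suc k))) (x3 k - x1 (Suc k)) + inner (g1 (x1 k)) (x3 k - x1 k)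
     = (f1 (x1 k) - f1 (x1 (Suc k)) - inner (g1 (x1 (Suc k))) (x1 k - x1 (Suc k))) - inner ?g1 (x3 k - x1 k)"
    by (simp add: inner_diff_left inner_diff_right)
  have e2: "f2 (x2 k) - f2 (x2 (Suc k)) - inner (g2 (x2 (Suc k))) (x3 k - x2 (Suc k)) + inner (g2 (x2 k)) (x3 k - x2 k)
     = (f2 (x2 k) - f2 (x2 (Suc k)) - inner (g2 (x2 (Suc k))) (x2 k - x2 (Suc k))) - inner ?g2 (x3 k - x2 k)"
    by (simp add: inner_diff_left inner_diff_right)
  have i1: "inner ?g1 (x3 k - x1 k) = (1/lam) * inner ?g1 ?d1 + \<gamma>/lam * norm ?g1^2"
    unfolding s1 by (simp add: inner_add_right power2_norm_eq_inner add_divide_distrib)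
  have i2: "inner ?g2 (x3 k - x2 k) = \<gamma>/lam * norm ?g2^2 + \<alpha>/lam * inner ?g2 ?d2 - \<alpha>/lam * inner ?g2 ?d1"
    unfolding s2 by (simp add: inner_add_right inner_diff_right power2_norm_eq_inner algebra_simps)
  show ?thesis
    unfolding e1 e2 i1 i2 using c1 c2 by (simp add: algebra_simps)
qed

end
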